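(* For every 3-periodic $P_1P_2P_3$ of $\mathcal{E}$, let $A_1^\dagger$ and $A_2^\dagger$ be the areas of its $f_1$-inversive and $f_2$-inversive triangles. Then \[A_1^\dagger A_2^\dagger=\frac{\rho^8}{8a^8b^2}\left[(a^4+2a^2b^2+4b^4)\delta+a^6+\tfrac32 a^4b^2+4b^6\right],\] which is independent of the 3-periodic.
   Context: Let $a>b>0$ and let $\mathcal{E}$ be the ellipse $x^2/a^2+y^2/b^2=1$. Set $c=\sqrt{a^2-b^2}$, $\delta=\sqrt{a^4-a^2b^2+b^4}$, and let the foci be $f_1=(-c,0)$, $f_2=(c,0)$. A 3-periodic is a triangle $P_1P_2P_3$ with vertices on $\mathcal{E}$ such that at each vertex the normal to $\mathcal{E}$ bisects the angle formed by the two sides meeting at that vertex; these form a one-parameter family (one through every point of $\mathcal{E}$). Fix $\rho>0$. For $j=1,2$, the $f_j$-inversive triangle of $P_1P_2P_3$ has vertices $P_{j,i}^\dagger=f_j+(\rho/d_{j,i})^2(P_i-f_j)$, where $d_{j,i}=|P_i-f_j|$ (inversion in the circle of radius $\rho$ centered at $f_j$). *)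

theory Defs
  imports "HOL-Analysis.Analysis"
begin

definition on_ellipse :: "real \<Rightarrow> real \<Rightarrow> real \<times> real \<Rightarrow> bool" where
  "on_ellipse a b P \<longleftrightarrow> (fst P)^2 / a^2 + (snd P)^2 / b^2 = 1"

definition cross2 :: "real \<times> real \<Rightarrow> real \<times> real \<Rightarrow> real" where
  "cross2 u v = fst u * snd v - snd u * fst v"

definition ellipse_normal :: "real \<Rightarrow> real \<Rightarrow> real \<times> real \<Rightarrow> real \<times> real" where
  "ellipse_normal a b P = (fst P / a^2, snd P / b^2)"

text \<open>The normal at P bisects the angle QPR: the internal bisector direction
  (sum of the unit vectors along the two sides) is parallel to the normal.\<close>
definition normal_bisects :: "real \<Rightarrow> real \<Rightarrow> real \<times> real \<Rightarrow> real \<times> real \<Rightarrow> real \<times> real \<Rightarrow> bool" where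
  "normal_bisects a b P Q R \<longleftrightarrow>
     cross2 ((1 / norm (Q - P)) *\<^sub>R (Q - P) + (1 / norm (R - P)) *\<^sub>R (R - P))
            (ellipse_normal a b P) = 0"

definition three_periodic :: "real \<Rightarrow> real \<Rightarrow> real \<times> real \<Rightarrow> real \<times> real \<Rightarrow> real \<times> real \<Rightarrow> bool" where
  "three_periodic a b P1 P2 P3 \<longleftrightarrow>
     P1 \<noteq> P2 \<and> P2 \<noteq> P3 \<and> P1 \<noteq> P3 \<and>
     on_ellipse a b P1 \<and> on_ellipse a b P2 \<and> on_ellipse a b P3 \<and>
     normal_bisects a b P1 P2 P3 \<and> normal_bisects a b P2 P3 P1 \<and> normal_bisects a b P3 P1 P2"

definition invert :: "real \<Rightarrow> real \<times> real \<Rightarrow> real \<times> real \<Rightarrow> real \<times> real" where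
  "invert \<rho> f P = f + (\<rho> / dist P f)^2 *\<^sub>R (P - f)"

definition tri_area :: "real \<times> real \<Rightarrow> real \<times> real \<Rightarrow> real \<times> real \<Rightarrow> real" where
  "tri_area Q1 Q2 Q3 = \<bar>cross2 (Q2 - Q1) (Q3 - Q1)\<bar> / 2"

end

theory Submission
  imports Defs
begin
lemma inv_core:
  fixes a b m n X Y :: real
  assumes "X^2 + Y^2 = 1" "m^2 = a + b" "n^2 = a - b"
  shows "Complex (a*X - m*n) (b*Y) * (of_real n * Complex X Y - of_real m)^2 = 2 * Complex X Y * of_real ((a - m*n*X)^2)"
    and "Complex (a*X - m*n) (-(b*Y)) * (of_real m * Complex X Y - of_real n)^2 = 2 * Complex X Y * of_real ((a - m*n*X)^2)"
proof -
  show "Complex (a*X - m*n) (b*Y) * (of_real n * Complex X Y - of_real m)^2 = 2 * Complex X Y * of_real ((a - m*n*X)^2)"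
    unfolding complex_eq_iff using assms by (simp add: power2_eq_square; algebra)
  show "Complex (a*X - m*n) (-(b*Y)) * (of_real m * Complex X Y - of_real n)^2 = 2 * Complex X Y * of_real ((a - m*n*X)^2)"
    unfolding complex_eq_iff using assms by (simp add: power2_eq_square; algebra)
qed

lemma cmod_unit: "X^2 + Y^2 = 1 \<Longrightarrow> cmod (Complex X Y) = 1"
  by (simp add: cmod_def)

lemma lin_ne0:
  fixes p q X Y :: real
  assumes "X^2 + Y^2 = 1" "p^2 \<noteq> q^2"
  shows "of_real p * Complex X Y - of_real q \<noteq> 0"
proof
  assume "of_real p * Complex X Y - of_real q = 0"
  hence "cmod (of_real p * Complex X Y) = cmod (of_real q)" by simp
  hence "\<bar>p\<bar> = \<bar>q\<bar>" using cmod_unit[OF assms(1)] by (simp add: norm_mult)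
  hence "p^2 = q^2" by (metis power2_abs)
  thus False using assms(2) by simp
qed

lemma inv_formula:
  fixes a b m n \<rho> x y :: real
  assumes ab: "a > b" "b > 0" and m: "m > 0" "m^2 = a + b" and nn: "n^2 = a - b"
    and e: "x^2/a^2 + y^2/b^2 = 1"
  defines "w \<equiv> Complex (fst (invert \<rho> (m*n, 0) (x, y)) - m*n) (snd (invert \<rho> (m*n, 0) (x, y)))"
    and "z \<equiv> Complex (x/a) (y/b)"
  shows "w = 2 * of_real (\<rho>^2) * z / (of_real n * z - of_real m)^2"
    and "cnj w = 2 * of_real (\<rho>^2) * z / (of_real m * z - of_real n)^2"
proof -
  define X where "X = x/a"
  define Y where "Y = y/b"
  have a0: "a > 0" using ab by simp
  have xX: "x = a*X" using a0 by (simp add: X_def)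
  have yY: "y = b*Y" using ab by (simp add: Y_def)
  have XY: "X^2 + Y^2 = 1" using e by (simp add: X_def Y_def power_divide)
  have mn2: "(m*n)^2 = a^2 - b^2"
  proof -
    have "(m*n)^2 = m^2*n^2" by (simp add: power_mult_distrib)
    also have "\<dots> = (a+b)*(a-b)" using m nn by simp
    also have "\<dots> = a^2-b^2" by (simp add: power2_eq_square algebra_simps)
    finally show ?thesis .
  qed
  define d where "d = a - m*n*X"
  have X1: "X^2 \<le> 1" using XY by (smt (verit) zero_le_power2)
  have "(m*n*X)^2 < a^2"
  proof -
    have "(m*n*X)^2 = (m*n)^2 * X^2" by (simp add: power_mult_distrib)
    also have "\<dots> \<le> (m*n)^2" using X1 by (simp add: mult_left_le)
    also have "\<dots> < a^2" using mn2 ab by simp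
    finally show ?thesis .
  qed
  hence dpos: "d > 0" unfolding d_def using a0
    by (smt (verit, best) abs_le_square_iff abs_of_pos)
  have dsq: "(x - m*n)^2 + y^2 = d^2"
    unfolding d_def xX yY using XY mn2 by algebra
  have dist_eq: "dist (x, y) (m*n, 0) = d"
    using dsq dpos by (simp add: dist_Pair_Pair dist_real_def real_sqrt_unique)
  have inv: "invert \<rho> (m*n, 0) (x, y) = (m*n + (\<rho>/d)^2 * (x - m*n), (\<rho>/d)^2 * y)"
    unfolding invert_def dist_eq by simp
  have wC: "w = of_real ((\<rho>/d)^2) * Complex (a*X - m*n) (b*Y)"
    unfolding w_def inv by (simp add: complex_eq_iff xX yY)
  have cwC: "cnj w = of_real ((\<rho>/d)^2) * Complex (a*X - m*n) (-(b*Y))"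
    unfolding wC by (simp add: complex_eq_iff)
  have zXY: "z = Complex X Y" by (simp add: z_def X_def Y_def)
  have mn_ne: "m^2 \<noteq> n^2" using m nn ab by simp
  have ne1: "of_real n * z - of_real m \<noteq> 0" unfolding zXY using lin_ne0[OF XY] mn_ne by metis
  have ne2: "of_real m * z - of_real n \<noteq> 0" unfolding zXY using lin_ne0[OF XY] mn_ne by metis
  have d0: "(of_real d :: complex) \<noteq> 0" using dpos by simp
  note c1 = inv_core(1)[OF XY m(2) nn, folded zXY, folded d_def]
  note c2 = inv_core(2)[OF XY m(2) nn, folded zXY, folded d_def]
  show "w = 2 * of_real (\<rho>^2) * z / (of_real n * z - of_real m)^2"
    unfolding wC using ne1 d0 c1
    by (simp add: field_simps power_divide)
  show "cnj w = 2 * of_real (\<rho>^2) * z / (of_real m * z - of_real n)^2"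
    unfolding cwC using ne2 d0 c2
    by (simp add: field_simps power_divide)
qed

definition D3 :: "complex \<Rightarrow> complex \<Rightarrow> complex \<Rightarrow> complex \<Rightarrow> complex \<Rightarrow> complex \<Rightarrow> complex \<Rightarrow> complex \<Rightarrow> complex \<Rightarrow> complex" where
  "D3 a1 b1 c1 a2 b2 c2 a3 b3 c3 = a1*(b2*c3 - c2*b3) - b1*(a2*c3 - c2*a3) + c1*(a2*b3 - b2*a3)"

definition Psi :: "complex \<Rightarrow> complex \<Rightarrow> complex \<Rightarrow> complex \<Rightarrow> complex \<Rightarrow> complex" where
  "Psi m n e1 e2 e3 = 2*m^3*n^3*(m^2-n^2)*(1+e2+e1*e3+e3^2)
      + e3*(m^8-4*m^6*n^2+4*m^2*n^6-n^8) - m^2*n^2*(m^4-n^4)*(e1+e2*e3)"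

definition Disc :: "complex \<Rightarrow> complex \<Rightarrow> complex \<Rightarrow> complex" where
  "Disc e1 e2 e3 = e1^2*e2^2 - 4*e2^3 - 4*e1^3*e3 + 18*e1*e2*e3 - 27*e3^2"

definition Hf :: "complex \<Rightarrow> complex \<Rightarrow> complex \<Rightarrow> complex \<Rightarrow> complex \<Rightarrow> complex" where
  "Hf m n e1 e2 e3 = n^2*(e1*m^2 + e3*n^2)^2 - m^2*(m^2 + e2*n^2)^2"

lemma D3_scale: "D3 l1 (l1*u1) (l1*t1) l2 (l2*u2) (l2*t2) l3 (l3*u3) (l3*t3) = l1*l2*l3 * D3 1 u1 t1 1 u2 t2 1 u3 t3"
  unfolding D3_def by algebra

lemma disc_lemma: "((z2-z1)*(z3-z1)*(z3-z2))^2 = Disc (z1+z2+z3) (z1*z2+z1*z3+z2*z3) (z1*z2*z3)"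
  unfolding Disc_def by algebra

lemma prod_lemma: "(n^2*z1^2-m^2)*(n^2*z2^2-m^2)*(n^2*z3^2-m^2) = Hf m n (z1+z2+z3) (z1*z2+z1*z3+z2*z3) (z1*z2*z3)"
  unfolding Hf_def by algebra

lemma fin:
  fixes a b dl E :: complex
  assumes dd: "dl^2 = a^4 - a^2 * b^2 + b^4"
  defines "q0 \<equiv> 2 * dl - a^2 - b^2" and "C2 \<equiv> a^2 - b^2"
  shows "-16 * a^8 * b^2 * (4 * q0^3 * C2 * (1+E^4) + (q0^4 + 18 * q0^2 * C2^2 - 27 * C2^4) * E^2)
     * (64 * a^2 * b^2 * E^2 * (a^2+b^2-2 * C2+q0)^2 - 16 * b^2 * C2 * (C2-q0)^2 * (1+E^2)^2) * C2^4
    = (2*(a^4+2*a^2*b^2+4*b^4)*dl + 2*a^6+3*a^4*b^2+8*b^6) *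
     (((a-b)*E^2*((a-b)*C2-(a+b)*q0)^2 - (a+b)*((a+b)*C2-(a-b)*q0)^2) *
      ((a+b)*E^2*((a+b)*C2-(a-b)*q0)^2 - (a-b)*((a-b)*C2-(a+b)*q0)^2))^2"
  unfolding q0_def C2_def using dd by algebra

lemma final_complex:
  fixes m n a b c dl s E :: complex
  assumes m2: "m^2 = a+b" and n2: "n^2 = a-b" and mn: "m*n = c" and c2: "c^2 = a^2-b^2"
    and cs: "c^2 * s = 2*dl - a^2 - b^2" and dd: "dl^2 = a^4 - a^2 * b^2 + b^4" and c0: "c \<noteq> 0"
  shows "-16*a^8*b^2 * Disc (-s*E) (-s) E * Psi m n (-s*E) (-s) E * Psi m (-n) (-s*E) (-s) E
     = (2*(a^4+2*a^2*b^2+4*b^4)*dl + 2*a^6+3*a^4*b^2+8*b^6) * (Hf m n (-s*E) (-s) E * Hf n m (-s*E) (-s) E)^2"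
proof -
  define q0 where "q0 = c^2 * s"
  have P1: "Psi m n (-s*E) (-s) E = 4*b*c*(c^2 - q0)*(1+E^2) + 8*a*b*E*(a^2+b^2-2*c^2+q0)"
  proof -
    have "m^3*n^3 = c^3" using mn by (metis power_mult_distrib)
    moreover have "m^2*n^2 = c^2" using mn by (metis power_mult_distrib)
    ultimately show ?thesis unfolding Psi_def q0_def using m2 n2 c2 by algebra
  qed
  have P2: "Psi m (-n) (-s*E) (-s) E = -4*b*c*(c^2 - q0)*(1+E^2) + 8*a*b*E*(a^2+b^2-2*c^2+q0)"
  proof -
    have "m^3*n^3 = c^3" using mn by (metis power_mult_distrib)
    moreover have "m^2*n^2 = c^2" using mn by (metis power_mult_distrib)
    ultimately show ?thesis unfolding Psi_def q0_def using m2 n2 c2 by algebra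
  qed
  have PP: "Psi m n (-s*E) (-s) E * Psi m (-n) (-s*E) (-s) E =
      64 * a^2 * b^2 * E^2 * (a^2+b^2-2 * c^2+q0)^2 - 16 * b^2 * c^2 * (c^2-q0)^2 * (1+E^2)^2"
    unfolding P1 P2 by algebra
  have DD: "c^8 * Disc (-s*E) (-s) E = 4 * q0^3 * c^2 * (1+E^4) + (q0^4 + 18 * q0^2 * c^4 - 27 * c^8) * E^2"
    unfolding Disc_def q0_def by algebra
  have H1: "c^4 * Hf m n (-s*E) (-s) E = (a-b)*E^2*((a-b)*c^2-(a+b)*q0)^2 - (a+b)*((a+b)*c^2-(a-b)*q0)^2"
    unfolding Hf_def q0_def using m2 n2 by algebra
  have H2: "c^4 * Hf n m (-s*E) (-s) E = (a+b)*E^2*((a+b)*c^2-(a-b)*q0)^2 - (a-b)*((a-b)*c^2-(a+b)*q0)^2"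
    unfolding Hf_def q0_def using m2 n2 by algebra
  note F = fin[OF dd]
  have q0e: "q0 = 2*dl - a^2 - b^2" using cs q0_def by simp
  note F' = F[folded q0e c2]
  have "c^16 * (-16*a^8*b^2 * Disc (-s*E) (-s) E * Psi m n (-s*E) (-s) E * Psi m (-n) (-s*E) (-s) E)
     = c^16 * ((2*(a^4+2*a^2*b^2+4*b^4)*dl + 2*a^6+3*a^4*b^2+8*b^6) * (Hf m n (-s*E) (-s) E * Hf n m (-s*E) (-s) E)^2)"
  proof -
    have "c^16 * (-16*a^8*b^2 * Disc (-s*E) (-s) E * Psi m n (-s*E) (-s) E * Psi m (-n) (-s*E) (-s) E)
        = -16*a^8*b^2 * (c^8 * Disc (-s*E) (-s) E) * (Psi m n (-s*E) (-s) E * Psi m (-n) (-s*E) (-s) E) * (c^2)^4"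
      by (simp add: algebra_simps power_mult[symmetric])
    also have "\<dots> = (2*(a^4+2*a^2*b^2+4*b^4)*dl + 2*a^6+3*a^4*b^2+8*b^6) *
       ((c^4 * Hf m n (-s*E) (-s) E) * (c^4 * Hf n m (-s*E) (-s) E))^2"
      unfolding DD PP H1 H2 using F' by simp
    also have "\<dots> = c^16 * ((2*(a^4+2*a^2*b^2+4*b^4)*dl + 2*a^6+3*a^4*b^2+8*b^6) * (Hf m n (-s*E) (-s) E * Hf n m (-s*E) (-s) E)^2)"
      by (simp add: algebra_simps power_mult_distrib power_mult[symmetric])
    finally show ?thesis .
  qed
  moreover have "c^16 \<noteq> 0" using c0 by simp
  ultimately show ?thesis by (metis mult_left_cancel)
qed

lemma cross_cx:
  "of_real (cross2 (Q2 - Q1) (Q3 - Q1)) * (2 * \<i>) =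
   (cnj (Complex (fst Q2 - f) (snd Q2)) - cnj (Complex (fst Q1 - f) (snd Q1))) * (Complex (fst Q3 - f) (snd Q3) - Complex (fst Q1 - f) (snd Q1))
   - (Complex (fst Q2 - f) (snd Q2) - Complex (fst Q1 - f) (snd Q1)) * (cnj (Complex (fst Q3 - f) (snd Q3)) - cnj (Complex (fst Q1 - f) (snd Q1)))"
  by (simp add: complex_eq_iff cross2_def algebra_simps)

lemma det_fact:
  fixes z1 z2 z3 m n :: complex
  shows "D3 ((n*z1 - m)^2*(m*z1 - n)^2) (z1*(m*z1 - n)^2) (z1*(n*z1 - m)^2)
            ((n*z2 - m)^2*(m*z2 - n)^2) (z2*(m*z2 - n)^2) (z2*(n*z2 - m)^2)
            ((n*z3 - m)^2*(m*z3 - n)^2) (z3*(m*z3 - n)^2) (z3*(n*z3 - m)^2)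
   = (z2-z1)*(z3-z1)*(z3-z2) * Psi m n (z1+z2+z3) (z1*z2+z1*z3+z2*z3) (z1*z2*z3)"
  unfolding D3_def Psi_def by algebra

lemma R_lemma:
  fixes z1 z2 z3 m n P :: complex
  assumes ne: "n*z1 - m \<noteq> 0" "n*z2 - m \<noteq> 0" "n*z3 - m \<noteq> 0" "m*z1 - n \<noteq> 0" "m*z2 - n \<noteq> 0" "m*z3 - n \<noteq> 0"
  shows "((2*P*z2/(m*z2-n)^2 - 2*P*z1/(m*z1-n)^2) * (2*P*z3/(n*z3-m)^2 - 2*P*z1/(n*z1-m)^2)
        - (2*P*z2/(n*z2-m)^2 - 2*P*z1/(n*z1-m)^2) * (2*P*z3/(m*z3-n)^2 - 2*P*z1/(m*z1-n)^2))
       * (((n*z1 - m)^2*(m*z1 - n)^2) * ((n*z2 - m)^2*(m*z2 - n)^2) * ((n*z3 - m)^2*(m*z3 - n)^2))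
     = -4*P^2 * D3 ((n*z1 - m)^2*(m*z1 - n)^2) (z1*(m*z1 - n)^2) (z1*(n*z1 - m)^2)
            ((n*z2 - m)^2*(m*z2 - n)^2) (z2*(m*z2 - n)^2) (z2*(n*z2 - m)^2)
            ((n*z3 - m)^2*(m*z3 - n)^2) (z3*(m*z3 - n)^2) (z3*(n*z3 - m)^2)"
proof -
  define u1 where "u1 = z1/(n*z1-m)^2"
  define u2 where "u2 = z2/(n*z2-m)^2"
  define u3 where "u3 = z3/(n*z3-m)^2"
  define t1 where "t1 = z1/(m*z1-n)^2"
  define t2 where "t2 = z2/(m*z2-n)^2"
  define t3 where "t3 = z3/(m*z3-n)^2"
  define l1 where "l1 = (n*z1 - m)^2*(m*z1 - n)^2"
  define l2 where "l2 = (n*z2 - m)^2*(m*z2 - n)^2"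
  define l3 where "l3 = (n*z3 - m)^2*(m*z3 - n)^2"
  have lu1: "z1*(m*z1 - n)^2 = l1 * u1" unfolding l1_def u1_def using ne by (simp add: field_simps)
  have lu2: "z2*(m*z2 - n)^2 = l2 * u2" unfolding l2_def u2_def using ne by (simp add: field_simps)
  have lu3: "z3*(m*z3 - n)^2 = l3 * u3" unfolding l3_def u3_def using ne by (simp add: field_simps)
  have lt1: "z1*(n*z1 - m)^2 = l1 * t1" unfolding l1_def t1_def using ne by (simp add: field_simps)
  have lt2: "z2*(n*z2 - m)^2 = l2 * t2" unfolding l2_def t2_def using ne by (simp add: field_simps)
  have lt3: "z3*(n*z3 - m)^2 = l3 * t3" unfolding l3_def t3_def using ne by (simp add: field_simps)
  have W: "2*P*z1/(n*z1-m)^2 = 2*P*u1" "2*P*z2/(n*z2-m)^2 = 2*P*u2" "2*P*z3/(n*z3-m)^2 = 2*P*u3"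
          "2*P*z1/(m*z1-n)^2 = 2*P*t1" "2*P*z2/(m*z2-n)^2 = 2*P*t2" "2*P*z3/(m*z3-n)^2 = 2*P*t3"
    unfolding u1_def u2_def u3_def t1_def t2_def t3_def by simp_all
  show ?thesis
    unfolding W l1_def[symmetric] l2_def[symmetric] l3_def[symmetric] lu1 lu2 lu3 lt1 lt2 lt3 D3_scale
    unfolding D3_def by algebra
qed

lemma focus_lemma:
  fixes a b m n \<rho> x1 y1 x2 y2 x3 y3 :: real
  assumes ab: "a > b" "b > 0" and m: "m > 0" "m^2 = a + b" and nn: "n^2 = a - b"
    and e1: "x1^2/a^2 + y1^2/b^2 = 1" and e2: "x2^2/a^2 + y2^2/b^2 = 1" and e3: "x3^2/a^2 + y3^2/b^2 = 1"
  defines "z1 \<equiv> Complex (x1/a) (y1/b)" and "z2 \<equiv> Complex (x2/a) (y2/b)" and "z3 \<equiv> Complex (x3/a) (y3/b)"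
  shows "of_real (cross2 (invert \<rho> (m*n, 0) (x2, y2) - invert \<rho> (m*n, 0) (x1, y1))
                         (invert \<rho> (m*n, 0) (x3, y3) - invert \<rho> (m*n, 0) (x1, y1))) * (2 * \<i>)
     * (((of_real n*z1 - of_real m)^2*(of_real m*z1 - of_real n)^2) * ((of_real n*z2 - of_real m)^2*(of_real m*z2 - of_real n)^2)
        * ((of_real n*z3 - of_real m)^2*(of_real m*z3 - of_real n)^2))
     = -4 * (of_real (\<rho>^2))^2 * ((z2-z1)*(z3-z1)*(z3-z2)) * Psi (of_real m) (of_real n) (z1+z2+z3) (z1*z2+z1*z3+z2*z3) (z1*z2*z3)"
proof -
  have XY: "(x/a)^2 + (y/b)^2 = 1" if "x^2/a^2 + y^2/b^2 = 1" for x y using that by (simp add: power_divide)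
  have mn_ne: "m^2 \<noteq> n^2" using m nn ab by simp
  have ne: "of_real n * Complex (x/a) (y/b) - of_real m \<noteq> 0" "of_real m * Complex (x/a) (y/b) - of_real n \<noteq> 0"
    if "x^2/a^2 + y^2/b^2 = 1" for x y
    using lin_ne0[OF XY[OF that]] mn_ne by metis+
  note i1 = inv_formula[OF ab m nn e1, of \<rho>, folded z1_def]
  note i2 = inv_formula[OF ab m nn e2, of \<rho>, folded z2_def]
  note i3 = inv_formula[OF ab m nn e3, of \<rho>, folded z3_def]
  note cc = cross_cx[of "invert \<rho> (m*n, 0) (x2, y2)" "invert \<rho> (m*n, 0) (x1, y1)" "invert \<rho> (m*n, 0) (x3, y3)" "m*n"]
  note RR = R_lemma[of "of_real n" z1 "of_real m" z2 z3 "of_real (\<rho>^2)",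
     OF ne(1)[OF e1, folded z1_def] ne(1)[OF e2, folded z2_def] ne(1)[OF e3, folded z3_def]
        ne(2)[OF e1, folded z1_def] ne(2)[OF e2, folded z2_def] ne(2)[OF e3, folded z3_def]]
  show ?thesis
    unfolding cc unfolding i1(2) i2(2) i3(2) unfolding i1(1) i2(1) i3(1) using RR det_fact[of "of_real n" z1 "of_real m" z2 z3] by simp
qed

lemma bis_real:
  fixes a b p1 p2 q1 q2 r1 r2 Lq Lr :: real
  assumes a: "a > 0" and b: "b > 0"
    and ep: "b^2*p1^2 + a^2*p2^2 = a^2*b^2" and eq: "b^2*q1^2 + a^2*q2^2 = a^2*b^2"
    and er: "b^2*r1^2 + a^2*r2^2 = a^2*b^2"
    and Lq: "Lq > 0" "Lq^2 = (q1-p1)^2 + (q2-p2)^2"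
    and Lr: "Lr > 0" "Lr^2 = (r1-p1)^2 + (r2-p2)^2"
    and QR: "(q1, q2) \<noteq> (r1, r2)"
    and cr: "((q1-p1)/Lq + (r1-p1)/Lr) * (p2/b^2) - ((q2-p2)/Lq + (r2-p2)/Lr) * (p1/a^2) = 0"
  shows "(1 - (p1*q1/a^2 + p2*q2/b^2)) / Lq = (1 - (p1*r1/a^2 + p2*r2/b^2)) / Lr"
proof -
  define u1 where "u1 = (q1-p1)/Lq"
  define u2 where "u2 = (q2-p2)/Lq"
  define v1 where "v1 = (r1-p1)/Lr"
  define v2 where "v2 = (r2-p2)/Lr"
  define n1 where "n1 = p1/a^2"
  define n2 where "n2 = p2/b^2"
  have uu: "u1^2 + u2^2 = 1"
  proof -
    have "u1^2 + u2^2 = ((q1-p1)^2 + (q2-p2)^2)/Lq^2" unfolding u1_def u2_def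
      by (simp add: power_divide add_divide_distrib)
    thus ?thesis using Lq(1) by (simp add: Lq(2)[symmetric])
  qed
  have vv: "v1^2 + v2^2 = 1"
  proof -
    have "v1^2 + v2^2 = ((r1-p1)^2 + (r2-p2)^2)/Lr^2" unfolding v1_def v2_def
      by (simp add: power_divide add_divide_distrib)
    thus ?thesis using Lr(1) by (simp add: Lr(2)[symmetric])
  qed
  have crr: "(u1+v1)*n2 - (u2+v2)*n1 = 0" using cr unfolding u1_def u2_def v1_def v2_def n1_def n2_def .
  have dm: "(u1+v1)*(u1-v1) + (u2+v2)*(u2-v2) = 0" using uu vv by algebra
  have k1: "(n1*(u1-v1) + n2*(u2-v2)) * (u1+v1) = 0"
  proof -
    have "(n1*(u1-v1) + n2*(u2-v2)) * (u1+v1) = ((u1+v1)*(u1-v1) + (u2+v2)*(u2-v2))*n1 + (u2-v2)*((u1+v1)*n2 - (u2+v2)*n1)"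
      by algebra
    thus ?thesis using dm crr by simp
  qed
  have k2: "(n1*(u1-v1) + n2*(u2-v2)) * (u2+v2) = 0"
  proof -
    have "(n1*(u1-v1) + n2*(u2-v2)) * (u2+v2) = ((u1+v1)*(u1-v1) + (u2+v2)*(u2-v2))*n2 - (u1-v1)*((u1+v1)*n2 - (u2+v2)*n1)"
      by algebra
    thus ?thesis using dm crr by simp
  qed
  have nm: "n1*(u1-v1) + n2*(u2-v2) = 0"
  proof (rule ccontr)
    assume h: "n1*(u1-v1) + n2*(u2-v2) \<noteq> 0"
    have d1: "u1 + v1 = 0" using k1 h by simp
    have d2: "u2 + v2 = 0" using k2 h by simp
    have l1: "Lr*(q1-p1) + Lq*(r1-p1) = 0" using d1 Lq Lr unfolding u1_def v1_def
      by (simp add: field_simps)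
    have l2: "Lr*(q2-p2) + Lq*(r2-p2) = 0" using d2 Lq Lr unfolding u2_def v2_def
      by (simp add: field_simps)
    have "2*Lr*Lq*(a^2*b^2 - (b^2*q1*r1 + a^2*q2*r2)) = 0"
      using l1 l2 ep eq er by algebra
    hence B: "b^2*q1*r1 + a^2*q2*r2 = a^2*b^2" using Lq Lr by simp
    have "b^2*(q1-r1)^2 + a^2*(q2-r2)^2 = 0" using B eq er by algebra
    hence "b^2*(q1-r1)^2 = 0 \<and> a^2*(q2-r2)^2 = 0"
      by (smt (verit) mult_nonneg_nonneg zero_le_power2)
    hence "q1 = r1 \<and> q2 = r2" using a b by simp
    thus False using QR by simp
  qed
  have "n1*u1 + n2*u2 = n1* v1 + n2* v2" using nm by algebra
  moreover have "n1*u1 + n2*u2 = (p1*(q1-p1)/a^2 + p2*(q2-p2)/b^2)/Lq"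
    unfolding n1_def n2_def u1_def u2_def by (simp add: add_divide_distrib)
  moreover have "n1* v1 + n2* v2 = (p1*(r1-p1)/a^2 + p2*(r2-p2)/b^2)/Lr"
    unfolding n1_def n2_def v1_def v2_def by (simp add: add_divide_distrib)
  moreover have "p1*(q1-p1)/a^2 + p2*(q2-p2)/b^2 = (p1*q1/a^2 + p2*q2/b^2) - (p1^2/a^2 + p2^2/b^2)"
    by (simp add: algebra_simps diff_divide_distrib power2_eq_square)
  moreover have "p1*(r1-p1)/a^2 + p2*(r2-p2)/b^2 = (p1*r1/a^2 + p2*r2/b^2) - (p1^2/a^2 + p2^2/b^2)"
    by (simp add: algebra_simps diff_divide_distrib power2_eq_square)
  moreover have e1: "p1^2/a^2 + p2^2/b^2 = 1" using ep a b by (simp add: field_simps)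
  ultimately have "(p1*q1/a^2 + p2*q2/b^2 - 1)/Lq = (p1*r1/a^2 + p2*r2/b^2 - 1)/Lr" by simp
  thus ?thesis by (smt (verit) minus_divide_left)
qed

definition gg :: "real \<Rightarrow> real \<Rightarrow> real \<times> real \<Rightarrow> real \<times> real \<Rightarrow> real" where
  "gg a b P Q = fst P * fst Q / a^2 + snd P * snd Q / b^2"

lemma ell_mult:
  assumes "a > 0" "b > 0" "on_ellipse a b (x, y)"
  shows "b^2 * x^2 + a^2 * y^2 = a^2 * b^2"
  using assms unfolding on_ellipse_def by (simp add: field_simps)

lemma dist_pair_sq: "dist (p1::real, p2::real) (q1, q2) = sqrt ((q1-p1)^2 + (q2-p2)^2)"
  by (simp add: dist_Pair_Pair dist_real_def power2_commute)

lemma bis: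
  assumes a: "a > 0" and b: "b > 0" and el: "on_ellipse a b P" "on_ellipse a b Q" "on_ellipse a b R"
    and ne: "P \<noteq> Q" "P \<noteq> R" "Q \<noteq> R" and nb: "normal_bisects a b P Q R"
  shows "(1 - gg a b P Q) / dist P Q = (1 - gg a b P R) / dist P R"
proof -
  obtain p1 p2 where P: "P = (p1, p2)" by (cases P)
  obtain q1 q2 where Q: "Q = (q1, q2)" by (cases Q)
  obtain r1 r2 where R: "R = (r1, r2)" by (cases R)
  define Lq where "Lq = dist P Q"
  define Lr where "Lr = dist P R"
  have Lq0: "Lq > 0" using ne unfolding Lq_def by simp
  have Lr0: "Lr > 0" using ne unfolding Lr_def by simp
  have Lq2: "Lq^2 = (q1-p1)^2 + (q2-p2)^2" unfolding Lq_def P Q dist_pair_sq by simp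
  have Lr2: "Lr^2 = (r1-p1)^2 + (r2-p2)^2" unfolding Lr_def P R dist_pair_sq by simp
  have nQ: "norm (Q - P) = Lq" unfolding Lq_def by (simp add: dist_norm norm_minus_commute)
  have nR: "norm (R - P) = Lr" unfolding Lr_def by (simp add: dist_norm norm_minus_commute)
  have cr: "((q1-p1)/Lq + (r1-p1)/Lr) * (p2/b^2) - ((q2-p2)/Lq + (r2-p2)/Lr) * (p1/a^2) = 0"
    using nb unfolding normal_bisects_def nQ nR cross2_def ellipse_normal_def
    by (simp add: P Q R)
  have QR: "(q1, q2) \<noteq> (r1, r2)" using ne Q R by simp
  have "(1 - (p1*q1/a^2 + p2*q2/b^2)) / Lq = (1 - (p1*r1/a^2 + p2*r2/b^2)) / Lr"
    by (rule bis_real[OF a b ell_mult[OF a b el(1)[unfolded P]] ell_mult[OF a b el(2)[unfolded Q]]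
          ell_mult[OF a b el(3)[unfolded R]] Lq0 Lq2 Lr0 Lr2 QR cr])
  thus ?thesis unfolding gg_def Lq_def Lr_def P Q R by simp
qed

lemma pair_F:
  fixes X Y X' Y' a b c K L :: real
  assumes u1: "X^2 + Y^2 = 1" and u2: "X'^2 + Y'^2 = 1" and c2: "c^2 = a^2 - b^2"
    and L2: "L^2 = a^2*(X-X')^2 + b^2*(Y-Y')^2"
    and KL: "1 - (X*X' + Y*Y') = K*L" and ne: "(X, Y) \<noteq> (X', Y')"
  shows "(Complex X Y)^2 + (Complex X' Y')^2 - of_real (K^2*c^2) * (Complex X Y)^2 * (Complex X' Y')^2
     - of_real (K^2*c^2) - 2 * of_real (1 - K^2*(a^2+b^2)) * Complex X Y * Complex X' Y' = 0"
proof -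
  define g where "g = X*X' + Y*Y'"
  have "2*(1 - g) = (X-X')^2 + (Y-Y')^2" unfolding g_def using u1 u2 by algebra
  moreover have "(X-X')^2 + (Y-Y')^2 > 0" using ne
    by (smt (verit) power2_less_0 prod.inject sum_power2_eq_zero_iff)
  ultimately have g1: "1 - g > 0" by simp
  have hL: "L^2 = (1 - g) * (a^2+b^2 - c^2*(X*X' - Y*Y'))" unfolding g_def L2 using u1 u2 c2 by algebra
  have "(1-g)*(1-g) = (1-g) * (K^2*(a^2+b^2 - c^2*(X*X' - Y*Y')))"
  proof -
    have "(1-g)*(1-g) = K^2*L^2" using KL unfolding g_def by (simp add: power2_eq_square)
    thus ?thesis unfolding hL by (simp add: algebra_simps)
  qed
  hence br0: "1 - g = K^2*(a^2+b^2 - c^2*(X*X' - Y*Y'))" using g1 by simp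
  have br: "X*X' + Y*Y' - (K^2*c^2)*(X*X' - Y*Y') - (1 - K^2*(a^2+b^2)) = 0"
    using br0 unfolding g_def by (simp add: algebra_simps)
  show ?thesis unfolding complex_eq_iff using u1 u2 br
    by (simp add: power2_eq_square; algebra)
qed

lemma vieta:
  fixes z1 z2 z3 :: complex and s r :: real
  assumes F12: "z1^2 + z2^2 - of_real s * z1^2 * z2^2 - of_real s - 2 * of_real r * z1 * z2 = 0"
    and F23: "z2^2 + z3^2 - of_real s * z2^2 * z3^2 - of_real s - 2 * of_real r * z2 * z3 = 0"
    and F13: "z1^2 + z3^2 - of_real s * z1^2 * z3^2 - of_real s - 2 * of_real r * z1 * z3 = 0"
    and ne: "z1 \<noteq> z2" "z2 \<noteq> z3" "z1 \<noteq> z3" and s0: "s \<noteq> 0"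
    and c1: "cnj z1 * z1 = 1" and c2: "cnj z2 * z2 = 1" and c3: "cnj z3 * z3 = 1"
  shows "z1*z2 + z1*z3 + z2*z3 = - of_real s"
    and "z1 + z2 + z3 = - of_real s * (z1*z2*z3)"
    and "s^2 = 1 + 2*r"
proof -
  define S where "S = (of_real s :: complex)"
  define Rr where "Rr = (of_real r :: complex)"
  note F12' = F12[folded S_def Rr_def] and F23' = F23[folded S_def Rr_def] and F13' = F13[folded S_def Rr_def]
  have "(z2 - z3) * ((z2+z3)*(1 - S*z1^2) - 2*Rr*z1) = 0" using F12' F13' by algebra
  hence h1: "(z2+z3)*(1 - S*z1^2) = 2*Rr*z1" using ne by simp
  have "(z1 - z3) * ((z1+z3)*(1 - S*z2^2) - 2*Rr*z2) = 0" using F12' F23' by algebra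
  hence h2: "(z1+z3)*(1 - S*z2^2) = 2*Rr*z2" using ne by simp
  have "(z1 - z2) * (S*(z1*z2 + z1*z3 + z2*z3) + 1 + 2*Rr) = 0" using h1 h2 by algebra
  hence "S*(z1*z2 + z1*z3 + z2*z3) + 1 + 2*Rr = 0" using ne by simp
  hence se2: "S*(z1*z2 + z1*z3 + z2*z3) = -(1 + 2*Rr)" by algebra
  have e13: "z1 + z2 + z3 = - S * (z1*z2*z3)" using h1 se2 by algebra
  have Sne: "S \<noteq> 0" using s0 unfolding S_def by simp
  have "cnj S = S" unfolding S_def by simp
  have "cnj Rr = Rr" unfolding Rr_def by simp
  have ce2: "cnj (z1*z2 + z1*z3 + z2*z3) = z1*z2 + z1*z3 + z2*z3"
  proof -
    have "cnj (S * (z1*z2 + z1*z3 + z2*z3)) = cnj (-(1+2*Rr))" using se2 by simp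
    hence "cnj S * cnj (z1*z2 + z1*z3 + z2*z3) = -(1+2*cnj Rr)" by simp
    hence "S * cnj (z1*z2 + z1*z3 + z2*z3) = S * (z1*z2 + z1*z3 + z2*z3)"
      using \<open>cnj S = S\<close> \<open>cnj Rr = Rr\<close> se2 by simp
    thus ?thesis using Sne by simp
  qed
  have "(z1*z2*z3) * cnj (z1*z2 + z1*z3 + z2*z3) = z1 + z2 + z3"
  proof -
    have "(z1*z2*z3) * cnj (z1*z2 + z1*z3 + z2*z3) = (z1*z2*z3) * (cnj z1 * cnj z2 + cnj z1 * cnj z3 + cnj z2 * cnj z3)" by simp
    also have "\<dots> = z1 + z2 + z3" using c1 c2 c3 by algebra
    finally show ?thesis .
  qed
  hence "(z1*z2*z3) * (z1*z2 + z1*z3 + z2*z3) = - S * (z1*z2*z3)" using ce2 e13 by simp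
  moreover have "z1*z2*z3 \<noteq> 0" using c1 c2 c3 by auto
  moreover have "(z1*z2*z3) * (z1*z2 + z1*z3 + z2*z3) = - S * (z1*z2*z3) \<Longrightarrow> (z1*z2*z3) * ((z1*z2 + z1*z3 + z2*z3) + S) = 0"
    by algebra
  ultimately have "(z1*z2 + z1*z3 + z2*z3) + S = 0" by simp
  hence e2: "z1*z2 + z1*z3 + z2*z3 = - S" by algebra
  show "z1*z2 + z1*z3 + z2*z3 = - of_real s" using e2 S_def by simp
  show "z1 + z2 + z3 = - of_real s * (z1*z2*z3)" using e13 S_def by simp
  have "S*S = 1 + 2*Rr" using se2 e2 by algebra
  hence "(of_real (s^2) :: complex) = of_real (1 + 2*r)" unfolding S_def Rr_def by (simp add: power2_eq_square)
  thus "s^2 = 1 + 2*r" using of_real_eq_iff by blast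
qed

lemma l_prod:
  fixes z1 z2 z3 m n :: complex
  shows "(((n*z1 - m)^2*(m*z1 - n)^2) * ((n*z2 - m)^2*(m*z2 - n)^2) * ((n*z3 - m)^2*(m*z3 - n)^2))
       * ((((-n)*z1 - m)^2*(m*z1 - (-n))^2) * (((-n)*z2 - m)^2*(m*z2 - (-n))^2) * (((-n)*z3 - m)^2*(m*z3 - (-n))^2))
       = (Hf m n (z1+z2+z3) (z1*z2+z1*z3+z2*z3) (z1*z2*z3) * Hf n m (z1+z2+z3) (z1*z2+z1*z3+z2*z3) (z1*z2*z3))^2"
proof -
  have k: "((n*z - m)^2*(m*z - n)^2) * (((-n)*z - m)^2*(m*z - (-n))^2) = ((n^2*z^2-m^2)*(m^2*z^2-n^2))^2" for z
    by algebra
  have "(((n*z1 - m)^2*(m*z1 - n)^2) * ((n*z2 - m)^2*(m*z2 - n)^2) * ((n*z3 - m)^2*(m*z3 - n)^2))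
       * ((((-n)*z1 - m)^2*(m*z1 - (-n))^2) * (((-n)*z2 - m)^2*(m*z2 - (-n))^2) * (((-n)*z3 - m)^2*(m*z3 - (-n))^2))
      = (((n*z1 - m)^2*(m*z1 - n)^2) * (((-n)*z1 - m)^2*(m*z1 - (-n))^2))
       * (((n*z2 - m)^2*(m*z2 - n)^2) * (((-n)*z2 - m)^2*(m*z2 - (-n))^2))
       * (((n*z3 - m)^2*(m*z3 - n)^2) * (((-n)*z3 - m)^2*(m*z3 - (-n))^2))"
    by (simp only: mult_ac)
  also have "\<dots> = (((n^2*z1^2-m^2)*(n^2*z2^2-m^2)*(n^2*z3^2-m^2)) * ((m^2*z1^2-n^2)*(m^2*z2^2-n^2)*(m^2*z3^2-n^2)))^2"
    unfolding k by (simp only: mult_ac power_mult_distrib)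
  also have "\<dots> = (Hf m n (z1+z2+z3) (z1*z2+z1*z3+z2*z3) (z1*z2*z3) * Hf n m (z1+z2+z3) (z1*z2+z1*z3+z2*z3) (z1*z2*z3))^2"
    unfolding prod_lemma[of n z1 m z2 z3] prod_lemma[of m z1 n z2 z3] ..
  finally show ?thesis .
qed

lemma gg_norm: "gg a b (x, y) (x', y') = (x/a)*(x'/a) + (y/b)*(y'/b)"
  by (simp add: gg_def power2_eq_square)

lemma gg_sym: "gg a b P Q = gg a b Q P"
  by (simp add: gg_def mult.commute)

lemma dist_norm_sq:
  assumes "a \<noteq> 0" "b \<noteq> 0"
  shows "(dist (x, y) (x', y'))^2 = a^2*(x/a - x'/a)^2 + b^2*(y/b - y'/b)^2"
proof -
  have "(dist (x, y) (x', y'))^2 = (x'-x)^2 + (y'-y)^2" unfolding dist_pair_sq by simp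
  also have "\<dots> = a^2*(x/a - x'/a)^2 + b^2*(y/b - y'/b)^2" using assms
    by (simp add: power2_eq_square field_simps)
  finally show ?thesis .
qed

theorem mainTheorem8:
  fixes a b \<rho> :: real and P1 P2 P3 :: "real \<times> real"
  assumes "a > b" and "b > 0" and "\<rho> > 0"
    and "three_periodic a b P1 P2 P3"
  defines "c \<equiv> sqrt (a^2 - b^2)"
    and "\<delta> \<equiv> sqrt (a^4 - a^2 * b^2 + b^4)"
  shows "tri_area (invert \<rho> (-c, 0) P1) (invert \<rho> (-c, 0) P2) (invert \<rho> (-c, 0) P3)
       * tri_area (invert \<rho> (c, 0) P1) (invert \<rho> (c, 0) P2) (invert \<rho> (c, 0) P3)
       = \<rho>^8 / (8 * a^8 * b^2) *
         ((a^4 + 2 * a^2 * b^2 + 4 * b^4) * \<delta> + a^6 + 3/2 * a^4 * b^2 + 4 * b^6)"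
proof -
  obtain x1 y1 where P1: "P1 = (x1, y1)" by (cases P1)
  obtain x2 y2 where P2: "P2 = (x2, y2)" by (cases P2)
  obtain x3 y3 where P3: "P3 = (x3, y3)" by (cases P3)
  have a0: "a > 0" and b0: "b > 0" using assms by simp_all
  note tp = assms(4)[unfolded three_periodic_def]
  have ne12: "P1 \<noteq> P2" and ne23: "P2 \<noteq> P3" and ne13: "P1 \<noteq> P3"
    and el1: "on_ellipse a b P1" and el2: "on_ellipse a b P2" and el3: "on_ellipse a b P3"
    and nb1: "normal_bisects a b P1 P2 P3" and nb2: "normal_bisects a b P2 P3 P1"
    using tp by auto
  have b1: "(1 - gg a b P1 P2) / dist P1 P2 = (1 - gg a b P1 P3) / dist P1 P3"
    by (rule bis[OF a0 b0 el1 el2 el3 ne12 ne13 ne23 nb1])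
  have b2: "(1 - gg a b P2 P3) / dist P2 P3 = (1 - gg a b P2 P1) / dist P2 P1"
    by (rule bis[OF a0 b0 el2 el3 el1 ne23 ne12[symmetric] ne13[symmetric] nb2])
  define K where "K = (1 - gg a b P1 P2) / dist P1 P2"
  have d12: "dist P1 P2 > 0" and d13: "dist P1 P3 > 0" and d23: "dist P2 P3 > 0"
    using ne12 ne13 ne23 by simp_all
  have k12: "1 - gg a b P1 P2 = K * dist P1 P2" unfolding K_def using d12 by simp
  have k13: "1 - gg a b P1 P3 = K * dist P1 P3" using b1 d13 unfolding K_def[symmetric] by (simp add: field_simps)
  have k23: "1 - gg a b P2 P3 = K * dist P2 P3"
    using b2 d23 unfolding gg_sym[of a b P2 P1] dist_commute[of P2 P1] K_def[symmetric] by (simp add: field_simps)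
  define X1 where "X1 = x1/a"
  define X2 where "X2 = x2/a"
  define X3 where "X3 = x3/a"
  define Y1 where "Y1 = y1/b"
  define Y2 where "Y2 = y2/b"
  define Y3 where "Y3 = y3/b"
  have e1: "x1^2/a^2 + y1^2/b^2 = 1" using el1 P1 by (simp add: on_ellipse_def)
  have e2: "x2^2/a^2 + y2^2/b^2 = 1" using el2 P2 by (simp add: on_ellipse_def)
  have e3: "x3^2/a^2 + y3^2/b^2 = 1" using el3 P3 by (simp add: on_ellipse_def)
  have u1: "X1^2 + Y1^2 = 1" using e1 unfolding X1_def Y1_def by (simp add: power_divide)
  have u2: "X2^2 + Y2^2 = 1" using e2 unfolding X2_def Y2_def by (simp add: power_divide)
  have u3: "X3^2 + Y3^2 = 1" using e3 unfolding X3_def Y3_def by (simp add: power_divide)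
  have c2: "c^2 = a^2 - b^2" unfolding c_def using assms(1,2) by simp
  have c0: "c > 0" unfolding c_def using assms(1,2) by (simp add: power_strict_mono)
  have L12: "(dist P1 P2)^2 = a^2*(X1-X2)^2 + b^2*(Y1-Y2)^2"
    unfolding P1 P2 X1_def X2_def Y1_def Y2_def using dist_norm_sq a0 b0 by simp
  have L13: "(dist P1 P3)^2 = a^2*(X1-X3)^2 + b^2*(Y1-Y3)^2"
    unfolding P1 P3 X1_def X3_def Y1_def Y3_def using dist_norm_sq a0 b0 by simp
  have L23: "(dist P2 P3)^2 = a^2*(X2-X3)^2 + b^2*(Y2-Y3)^2"
    unfolding P2 P3 X2_def X3_def Y2_def Y3_def using dist_norm_sq a0 b0 by simp
  have g12: "1 - (X1*X2 + Y1*Y2) = K * dist P1 P2" using k12 unfolding P1 P2 gg_norm X1_def X2_def Y1_def Y2_def .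
  have g13: "1 - (X1*X3 + Y1*Y3) = K * dist P1 P3" using k13 unfolding P1 P3 gg_norm X1_def X3_def Y1_def Y3_def .
  have g23: "1 - (X2*X3 + Y2*Y3) = K * dist P2 P3" using k23 unfolding P2 P3 gg_norm X2_def X3_def Y2_def Y3_def .
  have inj: "(x/a, y/b) \<noteq> (x'/a, y'/b)" if "(x, y) \<noteq> (x', y')" for x y x' y'
    using that a0 b0 by auto
  have n12: "(X1, Y1) \<noteq> (X2, Y2)" using inj ne12 unfolding P1 P2 X1_def X2_def Y1_def Y2_def by blast
  have n13: "(X1, Y1) \<noteq> (X3, Y3)" using inj ne13 unfolding P1 P3 X1_def X3_def Y1_def Y3_def by blast
  have n23: "(X2, Y2) \<noteq> (X3, Y3)" using inj ne23 unfolding P2 P3 X2_def X3_def Y2_def Y3_def by blast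
  note F12 = pair_F[OF u1 u2 c2 L12 g12 n12]
  note F13 = pair_F[OF u1 u3 c2 L13 g13 n13]
  note F23 = pair_F[OF u2 u3 c2 L23 g23 n23]
  define z1 where "z1 = Complex X1 Y1"
  define z2 where "z2 = Complex X2 Y2"
  define z3 where "z3 = Complex X3 Y3"
  define s where "s = K^2 * c^2"
  define r where "r = 1 - K^2 * (a^2 + b^2)"
  have Kpos: "K > 0"
  proof -
    have "2*(1 - (X1*X2 + Y1*Y2)) = (X1-X2)^2 + (Y1-Y2)^2" using u1 u2 by algebra
    moreover have "(X1-X2)^2 + (Y1-Y2)^2 > 0" using n12
      by (smt (verit) power2_less_0 prod.inject sum_power2_eq_zero_iff)
    ultimately have "K * dist P1 P2 > 0" using g12 by simp
    thus ?thesis using d12 by (simp add: zero_less_mult_iff)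
  qed
  have s0: "s \<noteq> 0" unfolding s_def using Kpos c0 by simp
  have cz: "cnj (Complex X Y) * Complex X Y = 1" if "X^2 + Y^2 = 1" for X Y
    using that by (simp add: complex_eq_iff power2_eq_square)
  have zn12: "z1 \<noteq> z2" using n12 unfolding z1_def z2_def by simp
  have zn13: "z1 \<noteq> z3" using n13 unfolding z1_def z3_def by simp
  have zn23: "z2 \<noteq> z3" using n23 unfolding z2_def z3_def by simp
  note V = vieta[of z1 z2 s r z3, OF F12[folded z1_def z2_def s_def r_def] F23[folded z2_def z3_def s_def r_def]
     F13[folded z1_def z3_def s_def r_def] zn12 zn23 zn13 s0 cz[OF u1, folded z1_def] cz[OF u2, folded z2_def] cz[OF u3, folded z3_def]]
  have dpos: "\<delta> > 0" unfolding \<delta>_def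
  proof -
    have "a^4 - a^2*b^2 + b^4 = (a^2 - b^2)^2 + a^2*b^2" by algebra
    moreover have "a^2*b^2 > 0" using a0 b0 by simp
    ultimately show "sqrt (a^4 - a^2*b^2 + b^4) > 0" by (smt (verit) real_sqrt_gt_zero zero_le_power2)
  qed
  have d2: "\<delta>^2 = a^4 - a^2*b^2 + b^4" unfolding \<delta>_def
  proof -
    have "a^4 - a^2*b^2 + b^4 = (a^2 - b^2)^2 + a^2*b^2" by algebra
    hence "a^4 - a^2*b^2 + b^4 \<ge> 0" by (smt (verit) zero_le_mult_iff zero_le_power2)
    thus "(sqrt (a^4 - a^2*b^2 + b^4))^2 = a^4 - a^2*b^2 + b^4" by simp
  qed
  have cs: "c^2 * s = 2*\<delta> - a^2 - b^2"
  proof -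
    have "s^2 = 3 - 2*K^2*(a^2+b^2)" using V(3) unfolding r_def by simp
    hence "(c^2* s + a^2 + b^2)^2 = (2*\<delta>)^2" using s_def c2 d2 by algebra
    moreover have "c^2* s + a^2 + b^2 \<ge> 0" unfolding s_def by (simp add: add_nonneg_nonneg)
    moreover have "2*\<delta> \<ge> 0" using dpos by simp
    ultimately have "c^2* s + a^2 + b^2 = 2*\<delta>" using power2_eq_imp_eq by blast
    thus ?thesis by simp
  qed
  define m where "m = sqrt (a+b)"
  define n where "n = sqrt (a-b)"
  have m0: "m > 0" unfolding m_def using a0 b0 by simp
  have m2: "m^2 = a+b" unfolding m_def using a0 b0 by simp
  have n2: "n^2 = a-b" unfolding n_def using assms(1) by simp
  have mn2: "(-n)^2 = a-b" using n2 by simp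
  have mnc: "m*n = c" unfolding m_def n_def c_def using assms(1,2)
    by (simp add: real_sqrt_mult[symmetric] power2_eq_square algebra_simps)
  have foc2: "(c, 0) = (m*n, 0::real)" using mnc by simp
  have foc1: "(-c, 0) = (m*(-n), 0::real)" using mnc by simp
  have zz1: "z1 = Complex (x1/a) (y1/b)" unfolding z1_def X1_def Y1_def ..
  have zz2: "z2 = Complex (x2/a) (y2/b)" unfolding z2_def X2_def Y2_def ..
  have zz3: "z3 = Complex (x3/a) (y3/b)" unfolding z3_def X3_def Y3_def ..
  note FP = focus_lemma[OF assms(1,2) m0 m2 n2 e1 e2 e3, of \<rho>, folded zz1 zz2 zz3 foc2 P1 P2 P3]
  note FM = focus_lemma[OF assms(1,2) m0 m2 mn2 e1 e2 e3, of \<rho>, folded zz1 zz2 zz3 foc1 P1 P2 P3]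
  define cr1 where "cr1 = cross2 (invert \<rho> (-c, 0) P2 - invert \<rho> (-c, 0) P1) (invert \<rho> (-c, 0) P3 - invert \<rho> (-c, 0) P1)"
  define cr2 where "cr2 = cross2 (invert \<rho> (c, 0) P2 - invert \<rho> (c, 0) P1) (invert \<rho> (c, 0) P3 - invert \<rho> (c, 0) P1)"
  define M where "M = (of_real m :: complex)"
  define N where "N = (of_real n :: complex)"
  define PP where "PP = (of_real (\<rho>^2) :: complex)"
  define E1 where "E1 = z1+z2+z3"
  define E2 where "E2 = z1*z2+z1*z3+z2*z3"
  define E3 where "E3 = z1*z2*z3"
  define VV where "VV = (z2-z1)*(z3-z1)*(z3-z2)"
  define Lp where "Lp = ((N*z1 - M)^2*(M*z1 - N)^2) * ((N*z2 - M)^2*(M*z2 - N)^2) * ((N*z3 - M)^2*(M*z3 - N)^2)"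
  define Lm where "Lm = (((-N)*z1 - M)^2*(M*z1 - (-N))^2) * (((-N)*z2 - M)^2*(M*z2 - (-N))^2) * (((-N)*z3 - M)^2*(M*z3 - (-N))^2)"
  have FP': "of_real cr2 * (2 * \<i>) * Lp = -4 * PP^2 * VV * Psi M N E1 E2 E3"
    using FP unfolding cr2_def Lp_def M_def N_def PP_def E1_def E2_def E3_def VV_def .
  have FM': "of_real cr1 * (2 * \<i>) * Lm = -4 * PP^2 * VV * Psi M (-N) E1 E2 E3"
    using FM unfolding cr1_def Lm_def M_def N_def PP_def E1_def E2_def E3_def VV_def of_real_minus .
  have mnne: "m^2 \<noteq> n^2" "m^2 \<noteq> (-n)^2" using m2 n2 b0 by simp_all
  have nz: "of_real p * Complex X Y - of_real q \<noteq> 0" if "X^2+Y^2 = 1" "p^2 \<noteq> q^2" for p q X Y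
    using lin_ne0[OF that] .
  have Lp0: "Lp \<noteq> 0" unfolding Lp_def M_def N_def z1_def z2_def z3_def
    using nz[OF u1] nz[OF u2] nz[OF u3] mnne by simp
  have Lm0: "Lm \<noteq> 0" unfolding Lm_def M_def N_def z1_def z2_def z3_def
    using nz[OF u1, of "-n" m] nz[OF u2, of "-n" m] nz[OF u3, of "-n" m]
          nz[OF u1, of m "-n"] nz[OF u2, of m "-n"] nz[OF u3, of m "-n"] mnne by simp
  define HH where "HH = Hf M N E1 E2 E3 * Hf N M E1 E2 E3"
  have LL: "Lp * Lm = HH^2" unfolding Lp_def Lm_def HH_def E1_def E2_def E3_def by (rule l_prod)
  have HH0: "HH \<noteq> 0" using Lp0 Lm0 LL by (metis mult_eq_0_iff power_not_zero zero_power2)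
  have VD: "VV^2 = Disc E1 E2 E3" unfolding VV_def E1_def E2_def E3_def by (rule disc_lemma)
  have X: "of_real (cr1*cr2) * (-4) * HH^2 = 16 * PP^4 * (Disc E1 E2 E3 * (Psi M N E1 E2 E3 * Psi M (-N) E1 E2 E3))"
  proof -
    have "(of_real cr1 * (2 * \<i>) * Lm) * (of_real cr2 * (2 * \<i>) * Lp) = (-4 * PP^2 * VV * Psi M (-N) E1 E2 E3) * (-4 * PP^2 * VV * Psi M N E1 E2 E3)"
      unfolding FP' FM' by (rule refl)
    hence "(of_real cr1 * of_real cr2) * ((2 * \<i>) * (2 * \<i>)) * (Lp * Lm) = 16 * PP^4 * (VV^2 * (Psi M N E1 E2 E3 * Psi M (-N) E1 E2 E3))"
      by algebra
    moreover have "(of_real (cr1*cr2) :: complex) = of_real cr1 * of_real cr2" by simp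
    moreover have "\<i> * \<i> = -1" by simp
    ultimately show ?thesis unfolding LL VD by algebra
  qed
  have SE2: "E2 = - of_real s" using V(1) unfolding E2_def .
  have SE1: "E1 = - of_real s * E3" using V(2) unfolding E1_def E3_def .
  have Y: "-16 * (of_real a)^8 * (of_real b)^2 * Disc E1 E2 E3 * Psi M N E1 E2 E3 * Psi M (-N) E1 E2 E3
     = (2*((of_real a)^4+2*(of_real a)^2*(of_real b)^2+4*(of_real b)^4)* of_real \<delta> + 2*(of_real a)^6+3*(of_real a)^4*(of_real b)^2+8*(of_real b)^6) * HH^2"
    unfolding HH_def SE2 SE1
  proof (rule final_complex)
    show "M^2 = of_real a + of_real b" unfolding M_def using arg_cong[OF m2, of complex_of_real] by simp
    show "N^2 = of_real a - of_real b" unfolding N_def using arg_cong[OF n2, of complex_of_real] by simp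
    show "M*N = of_real c" unfolding M_def N_def using arg_cong[OF mnc, of complex_of_real] by simp
    show "(of_real c :: complex)^2 = (of_real a)^2 - (of_real b)^2" using arg_cong[OF c2, of complex_of_real] by simp
    show "(of_real c :: complex)^2 * of_real s = 2 * of_real \<delta> - (of_real a)^2 - (of_real b)^2"
      using arg_cong[OF cs, of complex_of_real] by simp
    show "(of_real \<delta> :: complex)^2 = (of_real a)^4 - (of_real a)^2 * (of_real b)^2 + (of_real b)^4"
      using arg_cong[OF d2, of complex_of_real] by simp
    show "(of_real c :: complex) \<noteq> 0" using c0 by simp
  qed
  define K2 where "K2 = 2*(a^4+2*a^2*b^2+4*b^4)*\<delta> + 2*a^6+3*a^4*b^2+8*b^6"
  have K2c: "(2*((of_real a)^4+2*(of_real a)^2*(of_real b)^2+4*(of_real b)^4)* of_real \<delta> + 2*(of_real a)^6+3*(of_real a)^4*(of_real b)^2+8*(of_real b)^6 :: complex) = of_real K2"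
    unfolding K2_def by simp
  have "of_real (cr1*cr2) * (-4) * HH^2 * (-16 * (of_real a)^8 * (of_real b)^2) = 16 * PP^4 * (of_real K2 * HH^2)"
    using X Y[unfolded K2c] by algebra
  hence "HH^2 * (of_real (cr1*cr2) * (64 * (of_real a)^8 * (of_real b)^2) - 16 * PP^4 * of_real K2) = 0"
    by algebra
  hence "of_real (cr1*cr2) * (64 * (of_real a)^8 * (of_real b)^2) - 16 * PP^4 * of_real K2 = 0"
    using HH0 by simp
  hence "(of_real (cr1*cr2 * (64 * a^8 * b^2) - 16 * (\<rho>^2)^4 * K2) :: complex) = 0"
    unfolding PP_def by simp
  hence "cr1*cr2 * (64 * a^8 * b^2) - 16 * (\<rho>^2)^4 * K2 = 0" by (simp only: of_real_eq_0_iff)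
  hence crr: "cr1*cr2 * (64 * a^8 * b^2) = 16 * \<rho>^8 * K2"
    by (simp add: power_mult[symmetric])
  have t1: "(a^4+2*a^2*b^2+4*b^4)*\<delta> > 0" using a0 b0 dpos by (intro mult_pos_pos add_pos_pos) auto
  have t2: "2*a^6+3*a^4*b^2+8*b^6 > 0" using a0 b0 by (intro add_pos_pos mult_pos_pos) auto
  have K2pos: "K2 > 0" unfolding K2_def using t1 t2 by linarith
  have ab8: "64 * a^8 * b^2 > 0" using a0 b0 by simp
  have crq: "cr1*cr2 = \<rho>^8 * K2 / (4 * a^8 * b^2)"
  proof -
    have "cr1*cr2 = 16 * \<rho>^8 * K2 / (64 * a^8 * b^2)" using crr ab8 a0 b0 by (simp add: eq_divide_eq)
    also have "\<dots> = \<rho>^8 * K2 / (4 * a^8 * b^2)" by (simp add: ac_simps)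
    finally show ?thesis .
  qed
  have cpos: "cr1*cr2 > 0" unfolding crq using K2pos a0 b0 assms(3) by simp
  have "tri_area (invert \<rho> (-c, 0) P1) (invert \<rho> (-c, 0) P2) (invert \<rho> (-c, 0) P3)
       * tri_area (invert \<rho> (c, 0) P1) (invert \<rho> (c, 0) P2) (invert \<rho> (c, 0) P3) = \<bar>cr1*cr2\<bar>/4"
    unfolding tri_area_def cr1_def[symmetric] cr2_def[symmetric] by (simp add: abs_mult)
  also have "\<dots> = cr1*cr2/4" using cpos by simp
  also have "\<dots> = \<rho>^8 * K2 / (16 * a^8 * b^2)" unfolding crq using a0 b0 by (simp add: field_simps)
  also have "\<dots> = \<rho>^8 / (8 * a^8 * b^2) * ((a^4 + 2 * a^2 * b^2 + 4 * b^4) * \<delta> + a^6 + 3/2 * a^4 * b^2 + 4 * b^6)"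
    unfolding K2_def using a0 b0 by (simp add: field_simps)
  finally show ?thesis .
qed

end
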